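(* Consider the control setting described in the context, and let $M_1, M_2, \dots$ be generated by the FTRL Controller (FTRL-C) with $\sigma = \frac{\sqrt{\delta^2+2lz}}{\sqrt{2}\,\kappa_M\delta}$, where $z = p\,w\sqrt{d_u}\,\kappa_B$. Assume $h_1>0$. Then for every horizon $T\ge 1$, $$\mathcal{R}_T \le \frac{2\kappa_M}{\delta}\Big(\sqrt{2(\delta^2+2lz)}+\frac{lz}{\delta\sqrt{h_1}}\Big)\sqrt{\sum_{t=1}^T \max_{s\le t} g_s}.$$
   Context: System: $\mathbf{x}_{t+1}=A\mathbf{x}_t+B\mathbf{u}_t+\mathbf{w}_t$ for $t=1,2,\dots$, with $\mathbf{x}_t\in\mathbb{R}^{d_x}$, $\mathbf{u}_t\in\mathbb{R}^{d_u}$, $\mathbf{x}_1=0$, and disturbances $\mathbf{w}_t$ chosen arbitrarily (adversarially) subject to $\|\mathbf{w}_t\|\le w$; set $\mathbf{w}_t=0$ for $t\le 0$. The disturbance $\mathbf{w}_t$ and the cost $c_t$ are revealed after $\mathbf{u}_t$ is chosen. The spectral norm of $A$ equals $1-\delta$ with $0<\delta<1$, and $\|B\|\le\kappa_B$. Norms are Euclidean for vectors and Frobenius for matrices; $\langle X,Y\rangle=\sum_{ij}X^{(i,j)}Y^{(i,j)}$; $h_{a:b}=\sum_{s=a}^b h_s$. Policy class (disturbance-action controllers with memory $p\ge1$): a parameter is $M=[M^{[1]}|\cdots|M^{[p]}]$ with $M^{[j]}\in\mathbb{R}^{d_u\times d_x}$, restricted to $\mathcal{M}=\{M:\sum_{j=1}^p\|M^{[j]}\|\le\kappa_M\}$.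 Using parameter $M_t$ at step $t$ means playing $\mathbf{u}_t=\sum_{j=1}^p M_t^{[j]}\mathbf{w}_{t-j}$. The actual states/actions under the sequence $M_1,M_2,\dots$ are denoted $\mathbf{x}_t,\mathbf{u}_t$; for a fixed $M\in\mathcal{M}$, $\mathbf{x}_t(M),\mathbf{u}_t(M)$ denote the state and action at step $t$ had $M$ been used at every step $1,\dots,t$ (same disturbances). Costs $c_t:\mathbb{R}^{d_x}\times\mathbb{R}^{d_u}\to\mathbb{R}$ are convex and $l$-Lipschitz. Let $f_t(M)=c_t(\mathbf{x}_t(M),\mathbf{u}_t(M))$ (convex in $M$) and $G_t=\nabla f_t(M_t)$ (a (sub)gradient with respect to $M$), $g_t=\max(\|G_t\|,\|G_t\|^2)$. FTRL-C: $M_1\in\mathcal{M}$ arbitrary; for $t\ge1$, $M_{t+1}=\arg\min_{M\in\mathcal{M}}\sum_{s=1}^t\big(f_s(M)+r_s(M)\big)$ with $r_s(M)=\frac{\sigma_s}{2}\|M-M_s\|^2$, $\sigma_1=\sigma\sqrt{h_1}$, $\sigma_t=\sigma(\sqrt{h_{1:t}}-\sqrt{h_{1:t-1}})$ for $t\ge2$, and $h_t=\max_{s\le t}g_s$. Policy regret: $\mathcal{R}_T=\sum_{t=1}^T c_t(\mathbf{x}_t,\mathbf{u}_t)-\sum_{t=1}^T c_t(\mathbf{x}_t(M_\star),\mathbf{u}_t(M_\star))$, where $M_\star\in\arg\min_{M\in\mathcal{M}}\sum_{t=1}^T f_t(M)$. *)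

theory Defs
  imports "HOL-Analysis.Analysis"
begin

text \<open>State trajectory of x_{t+1} = A x_t + B u_t + w_t, x_1 = 0, driven by the
  action sequence u and disturbance sequence w (time index t = 1, 2, ...;
  the value at index 0 is an unused dummy).\<close>
fun traj :: "real^'dx^'dx \<Rightarrow> real^'du^'dx \<Rightarrow> (nat \<Rightarrow> real^'dx) \<Rightarrow> (nat \<Rightarrow> real^'du)
             \<Rightarrow> nat \<Rightarrow> real^'dx" where
  "traj A B w u 0 = 0"
| "traj A B w u (Suc t) =
     (if t = 0 then 0 else A *v traj A B w u t + B *v u t + w t)"

text \<open>Disturbance-action controller: block j of M (j ranges over the finite type 'p,
  with p = CARD('p) blocks) multiplies the disturbance with lag (lag j) in {1..p}.
  Disturbances with index \<le> 0 are 0 (via w 0 = 0 and truncated subtraction).\<close>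
definition dac :: "('p \<Rightarrow> nat) \<Rightarrow> real^'dx^'du^'p \<Rightarrow> (nat \<Rightarrow> real^'dx) \<Rightarrow> nat \<Rightarrow> real^'du" where
  "dac lag M w t = (\<Sum>j\<in>UNIV. (M $ j) *v w (t - lag j))"

definition Mset :: "real \<Rightarrow> (real^'dx^'du^'p) set" where
  "Mset \<kappa>M = {M. (\<Sum>j\<in>UNIV. norm (M $ j)) \<le> \<kappa>M}"

definition xM :: "real^'dx^'dx \<Rightarrow> real^'du^'dx \<Rightarrow> ('p \<Rightarrow> nat) \<Rightarrow> (nat \<Rightarrow> real^'dx)
                  \<Rightarrow> real^'dx^'du^'p \<Rightarrow> nat \<Rightarrow> real^'dx" where
  "xM A B lag w M t = traj A B w (dac lag M w) t"

definition fcost :: "(nat \<Rightarrow> real^'dx \<Rightarrow> real^'du \<Rightarrow> real) \<Rightarrow> real^'dx^'dx \<Rightarrow> real^'du^'dx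
                  \<Rightarrow> ('p \<Rightarrow> nat) \<Rightarrow> (nat \<Rightarrow> real^'dx) \<Rightarrow> nat \<Rightarrow> real^'dx^'du^'p \<Rightarrow> real" where
  "fcost c A B lag w t M = c t (xM A B lag w M t) (dac lag M w t)"

end

theory Submission
  imports Defs
begin


lemma norm_le_sum_cart: "norm (x::'a::real_normed_vector^'n) \<le> (\<Sum>i\<in>UNIV. norm (x$i))"
  by (simp add: norm_vec_def L2_set_le_sum)

lemma mat_vec_norm: "norm ((B::real^'n^'m) *v v) \<le> norm B * norm v"
proof -
  have "norm (B *v v) \<le> norm (\<chi> i. norm (B$i) * norm v)"
  proof (rule norm_le_componentwise_cart)
    fix i
    have "norm ((B *v v) $ i) = \<bar>B$i \<bullet> v\<bar>" by (simp add: matrix_vector_mul_component)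
    also have "\<dots> \<le> norm (B$i) * norm v" by (rule Cauchy_Schwarz_ineq2)
    finally show "norm ((B *v v) $ i) \<le> norm ((\<chi> i. norm (B$i) * norm v) $ i)" by simp
  qed
  also have "(\<chi> i. norm (B$i) * norm v) = norm v *\<^sub>R (\<chi> i. norm (B$i))"
    by (simp add: vec_eq_iff)
  also have "norm \<dots> = norm v * norm (\<chi> i. norm (B$i))" by simp
  also have "norm (\<chi> i. norm (B$i)) = norm B" by (simp add: norm_vec_def)
  finally show ?thesis by (simp add: mult.commute)
qed

lemma traj_step:
  "norm (traj A B w u (Suc t) - traj A B w u' (Suc t))
     \<le> onorm (\<lambda>x. A *v x) * norm (traj A B w u t - traj A B w u' t) + norm B * norm (u t - u' t)"
proof (cases "t = 0")
  case True
  have "0 \<le> onorm (\<lambda>x. A *v x)" by (rule onorm_pos_le) simp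
  then show ?thesis using True by simp
next
  case False
  have "traj A B w u (Suc t) - traj A B w u' (Suc t)
      = A *v (traj A B w u t - traj A B w u' t) + B *v (u t - u' t)"
    using False by (simp add: algebra_simps)
  also have "norm \<dots> \<le> norm (A *v (traj A B w u t - traj A B w u' t)) + norm (B *v (u t - u' t))"
    by (rule norm_triangle_ineq)
  also have "\<dots> \<le> onorm (\<lambda>x. A *v x) * norm (traj A B w u t - traj A B w u' t) + norm B * norm (u t - u' t)"
    apply (rule add_mono)
     apply (rule onorm) apply simp
    by (rule mat_vec_norm)
  finally show ?thesis .
qed

lemma dac_diff:
  fixes M :: "real^'dx^'du^'p::finite"
  assumes "\<And>t. norm (w t) \<le> wb"
  shows "norm (dac lag M w t - dac lag M' w t) \<le> real CARD('p) * wb * norm (M - M')"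
proof -
  have "dac lag M w t - dac lag M' w t = (\<Sum>j\<in>UNIV. ((M - M') $ j) *v w (t - lag j))"
    by (simp add: dac_def algebra_simps sum_subtractf)
  also have "norm \<dots> \<le> (\<Sum>j\<in>UNIV. norm (((M - M') $ j) *v w (t - lag j)))"
    by (rule norm_sum)
  also have "\<dots> \<le> (\<Sum>j\<in>(UNIV::'p set). norm (M - M') * wb)"
  proof (rule sum_mono)
    fix j
    have "norm (((M - M') $ j) *v w (t - lag j)) \<le> norm ((M - M') $ j) * norm (w (t - lag j))"
      by (rule mat_vec_norm)
    also have "\<dots> \<le> norm (M - M') * wb"
      apply (rule mult_mono)
      using assms[of "t - lag j"] Finite_Cartesian_Product.norm_nth_le by (auto simp del: vector_minus_component)
    finally show "norm (((M - M') $ j) *v w (t - lag j)) \<le> norm (M - M') * wb" .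
  qed
  finally show ?thesis by (simp add: algebra_simps)
qed

lemma traj_affine:
  "traj A B w (\<lambda>s. (1 - a) *\<^sub>R u s + a *\<^sub>R u' s) t = (1 - a) *\<^sub>R traj A B w u t + a *\<^sub>R traj A B w u' t"
proof (induction t)
  case 0 then show ?case by simp
next
  case (Suc t)
  show ?case
  proof (cases "t = 0")
    case True then show ?thesis by simp
  next
    case False
    have "(1 - a) *\<^sub>R traj A B w u (Suc t) + a *\<^sub>R traj A B w u' (Suc t)
      = A *v ((1 - a) *\<^sub>R traj A B w u t + a *\<^sub>R traj A B w u' t) + B *v ((1 - a) *\<^sub>R u t + a *\<^sub>R u' t)
        + ((1 - a) *\<^sub>R w t + a *\<^sub>R w t)"
      using False by (simp add: algebra_simps)
    also have "(1 - a) *\<^sub>R w t + a *\<^sub>R w t = w t" by (simp add: algebra_simps)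
    finally show ?thesis using False Suc by simp
  qed
qed

lemma dac_affine:
  "dac lag ((1 - a) *\<^sub>R M + a *\<^sub>R M') w t = (1 - a) *\<^sub>R dac lag M w t + a *\<^sub>R dac lag M' w t"
proof -
  have "dac lag ((1 - a) *\<^sub>R M + a *\<^sub>R M') w t
     = (\<Sum>j\<in>UNIV. (1 - a) *\<^sub>R (M $ j *v w (t - lag j)) + a *\<^sub>R (M' $ j *v w (t - lag j)))"
    unfolding dac_def by (simp add: matrix_vector_mult_add_rdistrib scaleR_matrix_vector_assoc)
  also have "\<dots> = (1 - a) *\<^sub>R dac lag M w t + a *\<^sub>R dac lag M' w t"
    unfolding dac_def by (simp add: sum.distrib scaleR_sum_right)
  finally show ?thesis .
qed



lemma quad_id:
  fixes x y m :: "'a::real_inner"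
  shows "(norm ((1 - a) *\<^sub>R x + a *\<^sub>R y - m))\<^sup>2
    = (1 - a) * (norm (x - m))\<^sup>2 + a * (norm (y - m))\<^sup>2 - a * (1 - a) * (norm (y - x))\<^sup>2"
proof -
  have e: "(1 - a) *\<^sub>R x + a *\<^sub>R y - m = (1 - a) *\<^sub>R (x - m) + a *\<^sub>R (y - m)"
    by (simp add: algebra_simps)
  have e2: "y - x = (y - m) - (x - m)" by simp
  show ?thesis
    unfolding e e2 power2_norm_eq_inner
    by (simp add: inner_add_left inner_add_right inner_diff_left inner_diff_right inner_commute algebra_simps power2_eq_square)
qed

lemma strong_min:
  fixes Fx Fy S N :: real and F :: "real \<Rightarrow> real"
  assumes "\<And>a. 0 < a \<Longrightarrow> a < 1 \<Longrightarrow> Fx \<le> F a"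
    and "\<And>a. 0 < a \<Longrightarrow> a < 1 \<Longrightarrow> F a \<le> (1 - a) * Fx + a * Fy - S / 2 * a * (1 - a) * N"
    and "S \<ge> 0" "N \<ge> 0"
  shows "Fy - Fx \<ge> S / 2 * N"
proof -
  have k: "Fy - Fx \<ge> S / 2 * N * (1 - a)" if "0 < a" "a < 1" for a
  proof -
    have "0 \<le> a * (Fy - Fx) - a * (S / 2 * N * (1 - a))"
      using assms(1)[OF that] assms(2)[OF that] by (simp add: algebra_simps)
    then have "0 \<le> a * ((Fy - Fx) - S / 2 * N * (1 - a))" by (simp add: algebra_simps)
    then show ?thesis using that by (simp add: zero_le_mult_iff)
  qed
  show ?thesis
  proof (rule ccontr)
    assume c: "\<not> ?thesis"
    define b where "b = S / 2 * N"
    have b0: "b \<ge> 0" using assms by (simp add: b_def)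
    have h2: "Fy - Fx \<ge> b / 2" using k[of "1/2"] by (simp add: b_def)
    have lt: "Fy - Fx < b" using c by (simp add: b_def)
    then have bp: "b > 0" using h2 by linarith
    define a where "a = (b - (Fy - Fx)) / (2 * b)"
    have a0: "0 < a" using lt bp by (simp add: a_def)
    have a1: "a < 1" using h2 bp lt by (simp add: a_def field_simps)
    have "Fy - Fx \<ge> b * (1 - a)" using k[OF a0 a1] by (simp add: b_def)
    moreover have "b * (1 - a) = (b + (Fy - Fx)) / 2" using bp by (simp add: a_def field_simps)
    ultimately have "(b + (Fy - Fx)) / 2 \<le> Fy - Fx" by simp
    then show False using lt by (simp add: field_simps)
  qed
qed

lemma sqrt_step:
  fixes H' h :: real
  assumes "H' \<ge> 0" "h \<ge> 0"
  shows "h / sqrt (H' + h) \<le> 2 * (sqrt (H' + h) - sqrt H')"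
proof (cases "H' + h = 0")
  case True then show ?thesis using assms by simp
next
  case False
  then have p: "sqrt (H' + h) > 0" using assms by simp
  have "h = (sqrt (H' + h) - sqrt H') * (sqrt (H' + h) + sqrt H')"
    using assms by (simp add: algebra_simps power2_eq_square[symmetric])
  also have "\<dots> \<le> (sqrt (H' + h) - sqrt H') * (2 * sqrt (H' + h))"
    apply (rule mult_left_mono)
    using assms by (auto intro: real_sqrt_le_mono)
  finally show ?thesis using p by (simp add: field_simps)
qed

lemma sqrt_sum:
  fixes h :: "nat \<Rightarrow> real"
  assumes "\<And>t. t \<ge> 1 \<Longrightarrow> h t \<ge> 0"
  shows "(\<Sum>t=1..n. h t / sqrt (\<Sum>s=1..t. h s)) \<le> 2 * sqrt (\<Sum>s=1..n. h s)"
proof (induction n)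
  case 0 then show ?case by simp
next
  case (Suc n)
  have H0: "(\<Sum>s=1..n. h s) \<ge> 0" using assms by (intro sum_nonneg) auto
  have hS: "h (Suc n) \<ge> 0" using assms by simp
  have "(\<Sum>t=1..Suc n. h t / sqrt (\<Sum>s=1..t. h s))
      = (\<Sum>t=1..n. h t / sqrt (\<Sum>s=1..t. h s)) + h (Suc n) / sqrt ((\<Sum>s=1..n. h s) + h (Suc n))"
    by simp
  also have "\<dots> \<le> 2 * sqrt (\<Sum>s=1..n. h s) + 2 * (sqrt ((\<Sum>s=1..n. h s) + h (Suc n)) - sqrt (\<Sum>s=1..n. h s))"
    by (rule add_mono[OF Suc sqrt_step[OF H0 hS]])
  also have "\<dots> = 2 * sqrt (\<Sum>s=1..Suc n. h s)" by simp
  finally show ?case .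
qed

lemma geo_inv:
  fixes E e :: "nat \<Rightarrow> real" and \<delta> K :: real
  assumes "0 < \<delta>" "E 1 = 0" "\<And>t. E (Suc t) \<le> (1 - \<delta>) * E t + K * e t / \<delta>"
  shows "\<delta> * (\<Sum>t=1..n. E t) + E (Suc n) \<le> K / \<delta> * (\<Sum>t=1..n. e t)"
proof (induction n)
  case 0 then show ?case using assms by simp
next
  case (Suc n)
  have "\<delta> * (\<Sum>t=1..Suc n. E t) + E (Suc (Suc n)) = \<delta> * (\<Sum>t=1..n. E t) + \<delta> * E (Suc n) + E (Suc (Suc n))"
    by (simp add: algebra_simps)
  also have "\<dots> \<le> \<delta> * (\<Sum>t=1..n. E t) + \<delta> * E (Suc n) + ((1 - \<delta>) * E (Suc n) + K * e (Suc n) / \<delta>)"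
    using assms(3)[of "Suc n"] by linarith
  also have "\<dots> = (\<delta> * (\<Sum>t=1..n. E t) + E (Suc n)) + K / \<delta> * e (Suc n)" by (simp add: algebra_simps)
  also have "\<dots> \<le> K / \<delta> * (\<Sum>t=1..n. e t) + K / \<delta> * e (Suc n)" using Suc by linarith
  also have "\<dots> = K / \<delta> * (\<Sum>t=1..Suc n. e t)" by (simp add: algebra_simps)
  finally show ?case .
qed


lemma aux_quad:
  fixes fc fm fm' a \<sigma> X Y N :: real
  assumes "fc \<le> (1 - a) * fm + a * fm'"
  shows "fc + \<sigma> / 2 * ((1 - a) * X + a * Y - a * (1 - a) * N)
     \<le> (1 - a) * (fm + \<sigma> / 2 * X) + a * (fm' + \<sigma> / 2 * Y) - \<sigma> * (a * (1 - a) * N / 2)"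
proof -
  have "fc + \<sigma> / 2 * ((1 - a) * X + a * Y - a * (1 - a) * N) - ((1 - a) * (fm + \<sigma> / 2 * X) + a * (fm' + \<sigma> / 2 * Y) - \<sigma> * (a * (1 - a) * N / 2))
     = fc - ((1 - a) * fm + a * fm')" by (simp add: field_simps)
  then show ?thesis using assms by linarith
qed

lemma final_alg:
  fixes \<delta> \<kappa> a \<sigma> q :: real
  assumes "\<delta> > 0" "\<kappa> > 0" "a > 0" "\<sigma> = sqrt a / (sqrt 2 * \<kappa> * \<delta>)" "q \<le> a / \<delta>\<^sup>2"
  shows "q / \<sigma> + 2 * \<sigma> * \<kappa>\<^sup>2 \<le> 2 * \<kappa> / \<delta> * sqrt (2 * a)"
proof -
  have sp: "\<sigma> > 0" using assms by simp
  have "q / \<sigma> \<le> (a / \<delta>\<^sup>2) / \<sigma>" by (rule divide_right_mono[OF assms(5)]) (use sp in simp)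
  also have "\<dots> = (sqrt a * sqrt a / \<delta>\<^sup>2) / (sqrt a / (sqrt 2 * \<kappa> * \<delta>))"
    using assms by simp
  also have "\<dots> = sqrt 2 * \<kappa> * sqrt a / \<delta>"
  proof -
    have "sqrt a > 0" using assms by simp
    then show ?thesis using assms by (simp add: field_simps power2_eq_square)
  qed
  finally have 1: "q / \<sigma> \<le> sqrt 2 * \<kappa> * sqrt a / \<delta>" .
  have 2: "2 * \<sigma> * \<kappa>\<^sup>2 = sqrt 2 * \<kappa> * sqrt a / \<delta>"
  proof -
    have "2 * \<sigma> * \<kappa>\<^sup>2 = (sqrt 2 * sqrt 2) * (sqrt a / (sqrt 2 * \<kappa> * \<delta>)) * \<kappa>\<^sup>2" using assms(4) by simp
    also have "\<dots> = sqrt 2 * \<kappa> * sqrt a / \<delta>" using assms by (simp add: field_simps power2_eq_square)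
    finally show ?thesis .
  qed
  have 3: "sqrt (2 * a) = sqrt 2 * sqrt a" by (simp add: real_sqrt_mult)
  have 4: "2 * \<kappa> / \<delta> * sqrt (2 * a) = sqrt 2 * \<kappa> * sqrt a / \<delta> + sqrt 2 * \<kappa> * sqrt a / \<delta>"
    unfolding 3 by (simp add: field_simps)
  show ?thesis unfolding 4 2 using 1 by linarith
qed


theorem theorem1:
  fixes A :: "real^'dx^'dx" and B :: "real^'du^'dx"
    and lag :: "'p::finite \<Rightarrow> nat"
    and w :: "nat \<Rightarrow> real^'dx" and wb :: real
    and c :: "nat \<Rightarrow> real^'dx \<Rightarrow> real^'du \<Rightarrow> real"
    and \<delta> \<kappa>B \<kappa>M l :: real
    and Ms :: "nat \<Rightarrow> real^'dx^'du^'p"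
    and G :: "nat \<Rightarrow> real^'dx^'du^'p"
    and T :: nat and Mstar :: "real^'dx^'du^'p"
  defines "f \<equiv> fcost c A B lag w"
    and "g \<equiv> (\<lambda>t. max (norm (G t)) ((norm (G t))\<^sup>2))"
  defines "h \<equiv> (\<lambda>t. Max (g ` {1..t}))"
  defines "H \<equiv> (\<lambda>t. \<Sum>s=1..t. h s)"
  defines "z \<equiv> real CARD('p) * wb * sqrt (real CARD('du)) * \<kappa>B"
  defines "\<sigma> \<equiv> sqrt (\<delta>\<^sup>2 + 2 * l * z) / (sqrt 2 * \<kappa>M * \<delta>)"
  defines "\<sigma>s \<equiv> (\<lambda>t. \<sigma> * (sqrt (H t) - sqrt (H (t - 1))))"
  assumes lag: "bij_betw lag UNIV {1..CARD('p)}"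
    and \<delta>: "0 < \<delta>" "\<delta> < 1"
    and A: "onorm (\<lambda>x. A *v x) = 1 - \<delta>"
    and B: "norm B \<le> \<kappa>B"
    and w0: "w 0 = 0"
    and wbound: "\<And>t. t \<ge> 1 \<Longrightarrow> norm (w t) \<le> wb"
    and convex: "\<And>t. t \<ge> 1 \<Longrightarrow> convex_on UNIV (\<lambda>(x, u). c t x u)"
    and lipschitz: "\<And>t. t \<ge> 1 \<Longrightarrow> l-lipschitz_on UNIV (\<lambda>(x, u). c t x u)"
    and M1: "Ms 1 \<in> Mset \<kappa>M"
    and ftrl: "\<And>t. t \<ge> 1 \<Longrightarrow> Ms (t + 1) \<in> Mset \<kappa>M \<and>
        (\<forall>M \<in> Mset \<kappa>M. (\<Sum>s=1..t. f s (Ms (t + 1)) + \<sigma>s s / 2 * (norm (Ms (t + 1) - Ms s))\<^sup>2)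
                      \<le> (\<Sum>s=1..t. f s M + \<sigma>s s / 2 * (norm (M - Ms s))\<^sup>2))"
    and subgrad: "\<And>t M. t \<ge> 1 \<Longrightarrow> f t M \<ge> f t (Ms t) + G t \<bullet> (M - Ms t)"
    and h1: "h 1 > 0"
    and T: "T \<ge> 1"
    and Mstar: "Mstar \<in> Mset \<kappa>M" "\<forall>M \<in> Mset \<kappa>M. (\<Sum>t=1..T. f t Mstar) \<le> (\<Sum>t=1..T. f t M)"
  shows "(\<Sum>t=1..T. c t (traj A B w (\<lambda>s. dac lag (Ms s) w s) t) (dac lag (Ms t) w t))
           - (\<Sum>t=1..T. c t (xM A B lag w Mstar t) (dac lag Mstar w t))
         \<le> 2 * \<kappa>M / \<delta> * (sqrt (2 * (\<delta>\<^sup>2 + 2 * l * z)) + l * z / (\<delta> * sqrt (h 1))) * sqrt (H T)"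
proof -
  define \<rho> where "\<rho> = 1 - \<delta>"
  define K where "K = real CARD('p) * wb * \<kappa>B"
  have wb0: "wb \<ge> 0" using wbound[of 1] norm_ge_zero[of "w 1"] by linarith
  have wall: "norm (w t) \<le> wb" for t
    using wbound[of t] w0 wb0 by (cases "t = 0") auto
  have kB0: "\<kappa>B \<ge> 0" using B norm_ge_zero[of B] by linarith
  have l0: "l \<ge> 0" using lipschitz[of 1] by (simp add: lipschitz_on_def)
  have kM0: "\<kappa>M \<ge> 0"
  proof -
    have "(\<Sum>j\<in>UNIV. norm (Ms 1 $ j)) \<le> \<kappa>M" using M1 by (simp add: Mset_def)
    moreover have "(\<Sum>j\<in>UNIV. norm (Ms 1 $ j)) \<ge> 0" by (simp add: sum_nonneg)
    ultimately show ?thesis by linarith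
  qed
  have normM: "norm M \<le> \<kappa>M" if "M \<in> Mset \<kappa>M" for M :: "real^'dx^'du^'p"
    using that norm_le_sum_cart[of M] unfolding Mset_def by (simp add: order_trans)
  have Ms_in: "Ms t \<in> Mset \<kappa>M" if t1: "t \<ge> 1" for t
  proof (cases "t = 1")
    case True then show ?thesis using M1 by simp
  next
    case False
    then obtain k where "t = k + 1" "k \<ge> 1" using t1 by (cases t) auto
    then show ?thesis using ftrl[of k] by simp
  qed
  have Mset_conv: "(1 - a) *\<^sub>R M + a *\<^sub>R M' \<in> Mset \<kappa>M"
    if "M \<in> Mset \<kappa>M" "M' \<in> Mset \<kappa>M" "0 \<le> a" "a \<le> 1" for M M' :: "real^'dx^'du^'p" and a :: real
  proof -
    have "(\<Sum>j\<in>UNIV. norm (((1 - a) *\<^sub>R M + a *\<^sub>R M') $ j))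
        \<le> (\<Sum>j\<in>UNIV. (1 - a) * norm (M $ j) + a * norm (M' $ j))"
    proof (rule sum_mono)
      fix j
      have "norm (((1 - a) *\<^sub>R M + a *\<^sub>R M') $ j) = norm ((1 - a) *\<^sub>R (M $ j) + a *\<^sub>R (M' $ j))" by simp
      also have "\<dots> \<le> norm ((1 - a) *\<^sub>R (M $ j)) + norm (a *\<^sub>R (M' $ j))" by (rule norm_triangle_ineq)
      also have "\<dots> = (1 - a) * norm (M $ j) + a * norm (M' $ j)" using that by simp
      finally show "norm (((1 - a) *\<^sub>R M + a *\<^sub>R M') $ j) \<le> (1 - a) * norm (M $ j) + a * norm (M' $ j)" .
    qed
    also have "\<dots> = (1 - a) * (\<Sum>j\<in>UNIV. norm (M $ j)) + a * (\<Sum>j\<in>UNIV. norm (M' $ j))"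
      by (simp add: sum.distrib sum_distrib_left)
    also have "\<dots> \<le> (1 - a) * \<kappa>M + a * \<kappa>M"
      using that unfolding Mset_def by (intro add_mono mult_left_mono) auto
    finally show ?thesis unfolding Mset_def by (simp add: algebra_simps)
  qed
  have Gg: "norm (G t) \<le> g t" "(norm (G t))\<^sup>2 \<le> g t" for t by (simp_all add: g_def)
  have gh: "g t \<le> h t" if "t \<ge> 1" for t
    unfolding h_def using that by (intro Max_ge) auto
  have h0: "h t \<ge> 0" if "t \<ge> 1" for t
    using gh[OF that] Gg(1)[of t] norm_ge_zero[of "G t"] by linarith
  have H0: "H 0 = 0" by (simp add: H_def)
  have HSuc: "H (Suc t) = H t + h (Suc t)" for t by (simp add: H_def)
  have Hmono: "H (t - 1) \<le> H t" for t
    using HSuc[of "t - 1"] h0[of t] by (cases t) auto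
  have Hnn: "H t \<ge> 0" for t unfolding H_def using h0 by (intro sum_nonneg) auto
  have Hpos: "H t \<ge> h 1" if "t \<ge> 1" for t
  proof -
    have "H t = h 1 + (\<Sum>s=2..t. h s)" unfolding H_def using that
      by (metis Suc_1 sum.atLeast_Suc_atMost)
    moreover have "(\<Sum>s=2..t. h s) \<ge> 0" using h0 by (intro sum_nonneg) auto
    ultimately show ?thesis by linarith
  qed
  have a_pos: "\<delta>\<^sup>2 + 2 * l * z > 0"
  proof -
    have "z \<ge> 0" unfolding z_def using wb0 kB0 by simp
    then show ?thesis using \<delta> l0 by (simp add: add_pos_nonneg)
  qed
  have \<sigma>0: "\<sigma> \<ge> 0" unfolding \<sigma>_def using kM0 \<delta> a_pos by (intro divide_nonneg_nonneg mult_nonneg_nonneg) auto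
  have \<sigma>s0: "\<sigma>s s \<ge> 0" for s
    unfolding \<sigma>s_def using \<sigma>0 Hmono[of s] by (simp add: real_sqrt_le_mono)
  have S_eq: "(\<Sum>s=1..t. \<sigma>s s) = \<sigma> * sqrt (H t)" for t
  proof (induction t)
    case 0 then show ?case by (simp add: H0)
  next
    case (Suc t) then show ?case by (simp add: \<sigma>s_def algebra_simps)
  qed
  have fconv: "f t ((1 - a) *\<^sub>R M + a *\<^sub>R M') \<le> (1 - a) * f t M + a * f t M'"
    if "t \<ge> 1" "0 \<le> a" "a \<le> 1" for t a and M M' :: "real^'dx^'du^'p"
  proof -
    have cv: "convex_on UNIV (\<lambda>(x, u). c t x u)" using convex that(1) by auto
    have d: "dac lag ((1 - a) *\<^sub>R M + a *\<^sub>R M') w = (\<lambda>s. (1 - a) *\<^sub>R dac lag M w s + a *\<^sub>R dac lag M' w s)"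
      by (rule ext) (rule dac_affine)
    have x: "xM A B lag w ((1 - a) *\<^sub>R M + a *\<^sub>R M') t = (1 - a) *\<^sub>R xM A B lag w M t + a *\<^sub>R xM A B lag w M' t"
      unfolding xM_def d by (rule traj_affine)
    have "f t ((1 - a) *\<^sub>R M + a *\<^sub>R M') = (\<lambda>(x, u). c t x u) ((1 - a) *\<^sub>R (xM A B lag w M t, dac lag M w t) + a *\<^sub>R (xM A B lag w M' t, dac lag M' w t))"
      unfolding f_def fcost_def x by (simp add: dac_affine)
    also have "\<dots> \<le> (1 - a) * (\<lambda>(x, u). c t x u) (xM A B lag w M t, dac lag M w t) + a * (\<lambda>(x, u). c t x u) (xM A B lag w M' t, dac lag M' w t)"
      by (rule convex_onD[OF cv]) (use that in auto)
    finally show ?thesis unfolding f_def fcost_def by simp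
  qed
  define F where "F t M = (\<Sum>s=1..t. f s M + \<sigma>s s / 2 * (norm (M - Ms s))\<^sup>2)" for t and M :: "real^'dx^'du^'p"
  have Fconv: "F t ((1 - a) *\<^sub>R M + a *\<^sub>R M') \<le> (1 - a) * F t M + a * F t M' - \<sigma> * sqrt (H t) / 2 * a * (1 - a) * (norm (M' - M))\<^sup>2"
    if "0 \<le> a" "a \<le> 1" for t a and M M' :: "real^'dx^'du^'p"
  proof -
    let ?N = "(norm (M' - M))\<^sup>2"
    have "F t ((1 - a) *\<^sub>R M + a *\<^sub>R M') \<le> (\<Sum>s=1..t. (1 - a) * (f s M + \<sigma>s s / 2 * (norm (M - Ms s))\<^sup>2)
        + a * (f s M' + \<sigma>s s / 2 * (norm (M' - Ms s))\<^sup>2) - \<sigma>s s * (a * (1 - a) * ?N / 2))"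
      unfolding F_def
    proof (rule sum_mono)
      fix s assume s: "s \<in> {1..t}"
      have q: "(norm ((1 - a) *\<^sub>R M + a *\<^sub>R M' - Ms s))\<^sup>2 = (1 - a) * (norm (M - Ms s))\<^sup>2 + a * (norm (M' - Ms s))\<^sup>2 - a * (1 - a) * ?N"
        by (rule quad_id)
      have fc: "f s ((1 - a) *\<^sub>R M + a *\<^sub>R M') \<le> (1 - a) * f s M + a * f s M'"
        using fconv[of s a M M'] s that by auto
      show "f s ((1 - a) *\<^sub>R M + a *\<^sub>R M') + \<sigma>s s / 2 * (norm ((1 - a) *\<^sub>R M + a *\<^sub>R M' - Ms s))\<^sup>2
        \<le> (1 - a) * (f s M + \<sigma>s s / 2 * (norm (M - Ms s))\<^sup>2) + a * (f s M' + \<sigma>s s / 2 * (norm (M' - Ms s))\<^sup>2) - \<sigma>s s * (a * (1 - a) * ?N / 2)"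
        unfolding q by (rule aux_quad[OF fc])
    qed
    also have "\<dots> = (\<Sum>s=1..t. (1 - a) * (f s M + \<sigma>s s / 2 * (norm (M - Ms s))\<^sup>2))
        + (\<Sum>s=1..t. a * (f s M' + \<sigma>s s / 2 * (norm (M' - Ms s))\<^sup>2)) - (\<Sum>s=1..t. \<sigma>s s * (a * (1 - a) * ?N / 2))"
      by (simp only: sum.distrib sum_subtractf)
    also have "\<dots> = (1 - a) * F t M + a * F t M' - (\<Sum>s=1..t. \<sigma>s s) * (a * (1 - a) * ?N / 2)"
      unfolding F_def by (simp only: sum_distrib_left sum_distrib_right)
    also have "\<dots> = (1 - a) * F t M + a * F t M' - \<sigma> * sqrt (H t) / 2 * a * (1 - a) * ?N"
      unfolding S_eq by simp
    finally show ?thesis .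
  qed
  have strong: "F t M - F t (Ms (t + 1)) \<ge> \<sigma> * sqrt (H t) / 2 * (norm (M - Ms (t + 1)))\<^sup>2"
    if "t \<ge> 1" "M \<in> Mset \<kappa>M" for t and M :: "real^'dx^'du^'p"
  proof -
    have min: "F t (Ms (t + 1)) \<le> F t M'" if "M' \<in> Mset \<kappa>M" for M'
      using ftrl[OF \<open>t \<ge> 1\<close>] that unfolding F_def by blast
    have Min: "Ms (t + 1) \<in> Mset \<kappa>M" using Ms_in[of "t + 1"] by simp
    show ?thesis
    proof (rule strong_min[where F = "\<lambda>a. F t ((1 - a) *\<^sub>R Ms (t + 1) + a *\<^sub>R M)"])
      fix a :: real assume a: "0 < a" "a < 1"
      show "F t (Ms (t + 1)) \<le> F t ((1 - a) *\<^sub>R Ms (t + 1) + a *\<^sub>R M)"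
        by (rule min) (rule Mset_conv[OF Min that(2)], use a in auto)
      show "F t ((1 - a) *\<^sub>R Ms (t + 1) + a *\<^sub>R M) \<le> (1 - a) * F t (Ms (t + 1)) + a * F t M - \<sigma> * sqrt (H t) / 2 * a * (1 - a) * (norm (M - Ms (t + 1)))\<^sup>2"
        using Fconv[of a t "Ms (t + 1)" M] a by simp
    qed (use \<sigma>0 Hnn in auto)
  qed
  have Fsplit: "F (Suc t) M = F t M + f (Suc t) M + \<sigma>s (Suc t) / 2 * (norm (M - Ms (Suc t)))\<^sup>2" for t M
    by (simp add: F_def)
  have F0: "F 0 M = 0" for M by (simp add: F_def)
  define \<Delta> where "\<Delta> t = F t (Ms t) - F t (Ms (t + 1))" for t
  define e where "e t = norm (Ms (t + 1) - Ms t)" for t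
  have step: "\<sigma> * sqrt (H t) * (e t)\<^sup>2 \<le> norm (G t) * e t \<and> \<Delta> t \<le> norm (G t) * e t - \<sigma> * sqrt (H t) / 2 * (e t)\<^sup>2"
    if t1: "t \<ge> 1" for t
  proof -
    obtain k where k: "t = Suc k" using t1 by (cases t) auto
    have P: "F k (Ms t) - F k (Ms (t + 1)) \<le> - (\<sigma> * sqrt (H k) / 2 * (e t)\<^sup>2)"
    proof (cases "k = 0")
      case True then show ?thesis by (simp add: F0 H0)
    next
      case False
      have "F k (Ms (t + 1)) - F k (Ms (k + 1)) \<ge> \<sigma> * sqrt (H k) / 2 * (norm (Ms (t + 1) - Ms (k + 1)))\<^sup>2"
        by (rule strong) (use False Ms_in in auto)
      then show ?thesis using k by (simp add: e_def)
    qed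
    have sub: "f t (Ms t) - f t (Ms (t + 1)) \<le> norm (G t) * e t"
    proof -
      have "f t (Ms (t + 1)) \<ge> f t (Ms t) + G t \<bullet> (Ms (t + 1) - Ms t)" by (rule subgrad) (use t1 in auto)
      moreover have "\<bar>G t \<bullet> (Ms (t + 1) - Ms t)\<bar> \<le> norm (G t) * e t" unfolding e_def by (rule Cauchy_Schwarz_ineq2)
      ultimately show ?thesis by linarith
    qed
    have Dt: "\<Delta> t = (F k (Ms t) - F k (Ms (t + 1))) + (f t (Ms t) - f t (Ms (t + 1))) - \<sigma>s t / 2 * (e t)\<^sup>2"
      unfolding \<Delta>_def k Fsplit by (simp add: e_def)
    have Ssplit: "\<sigma> * sqrt (H t) = \<sigma> * sqrt (H k) + \<sigma>s t" unfolding \<sigma>s_def k by (simp add: algebra_simps)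
    have low: "\<Delta> t \<ge> \<sigma> * sqrt (H t) / 2 * (e t)\<^sup>2"
      using strong[OF t1 Ms_in[OF t1]] unfolding \<Delta>_def e_def by (simp add: norm_minus_commute)
    have dist: "\<sigma> * sqrt (H t) / 2 * (e t)\<^sup>2 = \<sigma> * sqrt (H k) / 2 * (e t)\<^sup>2 + \<sigma>s t / 2 * (e t)\<^sup>2"
      unfolding Ssplit by (simp add: algebra_simps)
    have up: "\<Delta> t \<le> norm (G t) * e t - \<sigma> * sqrt (H t) / 2 * (e t)\<^sup>2"
      using Dt P sub dist by linarith
    have "\<sigma> * sqrt (H t) * (e t)\<^sup>2 = 2 * (\<sigma> * sqrt (H t) / 2 * (e t)\<^sup>2)" by simp
    then have "\<sigma> * sqrt (H t) * (e t)\<^sup>2 \<le> norm (G t) * e t" using up low by linarith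
    with up show ?thesis by blast
  qed
  have Mzero: "M = 0" if "\<kappa>M = 0" "M \<in> Mset \<kappa>M" for M :: "real^'dx^'du^'p"
    using normM[OF that(2)] that(1) by simp
  have Spos: "\<sigma> * sqrt (H t) > 0" if "\<kappa>M \<noteq> 0" "t \<ge> 1" for t
  proof -
    have "\<sigma> > 0" unfolding \<sigma>_def using that(1) kM0 \<delta> a_pos by (intro divide_pos_pos mult_pos_pos) auto
    moreover have "H t > 0" using Hpos[OF that(2)] h1 by linarith
    ultimately show ?thesis by simp
  qed
  have Sge: "\<sigma> * sqrt (H t) \<ge> 0" for t using \<sigma>0 Hnn[of t] by simp
  have e_bound: "e t \<le> norm (G t) / (\<sigma> * sqrt (H t))" if t1: "t \<ge> 1" for t
  proof (cases "\<kappa>M = 0")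
    case True
    then have "e t = 0" using Mzero[OF True Ms_in[OF t1]] Mzero[OF True Ms_in[of "t + 1"]] unfolding e_def by simp
    then show ?thesis using Sge[of t] by simp
  next
    case False
    note S = Spos[OF False t1]
    have st: "\<sigma> * sqrt (H t) * (e t)\<^sup>2 \<le> norm (G t) * e t" using step[OF t1] by blast
    show ?thesis
    proof (cases "e t = 0")
      case True then show ?thesis using S by simp
    next
      case False
      then have ep: "e t > 0" unfolding e_def by simp
      have "(\<sigma> * sqrt (H t) * e t) * e t \<le> norm (G t) * e t" using st by (simp add: power2_eq_square mult.assoc)
      then have "\<sigma> * sqrt (H t) * e t \<le> norm (G t)" using ep by simp
      then show ?thesis using S by (simp add: pos_le_divide_eq mult.commute)
    qed
  qed
  have \<Delta>_bound: "\<Delta> t \<le> (norm (G t))\<^sup>2 / (2 * (\<sigma> * sqrt (H t)))" if t1: "t \<ge> 1" for t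
  proof (cases "\<kappa>M = 0")
    case True
    then have "\<Delta> t = 0" using Mzero[OF True Ms_in[OF t1]] Mzero[OF True Ms_in[of "t + 1"]] unfolding \<Delta>_def by simp
    then show ?thesis using Sge[of t] by simp
  next
    case False
    note S = Spos[OF False t1]
    have up: "\<Delta> t \<le> norm (G t) * e t - \<sigma> * sqrt (H t) / 2 * (e t)\<^sup>2" using step[OF t1] by blast
    have sq: "0 \<le> (norm (G t) - \<sigma> * sqrt (H t) * e t)\<^sup>2" by simp
    have "2 * (\<sigma> * sqrt (H t)) * (norm (G t) * e t - \<sigma> * sqrt (H t) / 2 * (e t)\<^sup>2) \<le> (norm (G t))\<^sup>2"
      using sq by (simp add: power2_eq_square algebra_simps)
    then have "norm (G t) * e t - \<sigma> * sqrt (H t) / 2 * (e t)\<^sup>2 \<le> (norm (G t))\<^sup>2 / (2 * (\<sigma> * sqrt (H t)))"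
      using S by (simp add: pos_le_divide_eq mult.commute)
    then show ?thesis using up by linarith
  qed
  have tele: "(\<Sum>t=1..n. f t (Ms t)) = (\<Sum>t=1..n. \<Delta> t) + F n (Ms (n + 1))" for n
  proof (induction n)
    case 0 then show ?case by (simp add: F0)
  next
    case (Suc n) then show ?case by (simp add: \<Delta>_def Fsplit)
  qed
  have FT: "F T (Ms (T + 1)) \<le> (\<Sum>t=1..T. f t Mstar) + \<sigma> * sqrt (H T) / 2 * (2 * \<kappa>M)\<^sup>2"
  proof -
    have "F T (Ms (T + 1)) \<le> F T Mstar" using ftrl[OF T] Mstar(1) unfolding F_def by blast
    also have "\<dots> = (\<Sum>t=1..T. f t Mstar) + (\<Sum>s=1..T. \<sigma>s s / 2 * (norm (Mstar - Ms s))\<^sup>2)"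
      unfolding F_def by (simp add: sum.distrib)
    also have "(\<Sum>s=1..T. \<sigma>s s / 2 * (norm (Mstar - Ms s))\<^sup>2) \<le> (\<Sum>s=1..T. \<sigma>s s * ((2 * \<kappa>M)\<^sup>2 / 2))"
    proof (rule sum_mono)
      fix s assume s: "s \<in> {1..T}"
      have "norm (Mstar - Ms s) \<le> norm Mstar + norm (Ms s)" by (rule norm_triangle_ineq4)
      also have "\<dots> \<le> 2 * \<kappa>M" using normM[OF Mstar(1)] normM[OF Ms_in[of s]] s by auto
      finally have "(norm (Mstar - Ms s))\<^sup>2 \<le> (2 * \<kappa>M)\<^sup>2" by (rule power_mono) simp
      then show "\<sigma>s s / 2 * (norm (Mstar - Ms s))\<^sup>2 \<le> \<sigma>s s * ((2 * \<kappa>M)\<^sup>2 / 2)"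
      proof -
        have m: "\<sigma>s s * (norm (Mstar - Ms s))\<^sup>2 \<le> \<sigma>s s * (2 * \<kappa>M)\<^sup>2"
          using \<open>(norm (Mstar - Ms s))\<^sup>2 \<le> (2 * \<kappa>M)\<^sup>2\<close> \<sigma>s0[of s] by (rule mult_left_mono)
        have "\<sigma>s s / 2 * (norm (Mstar - Ms s))\<^sup>2 = (\<sigma>s s * (norm (Mstar - Ms s))\<^sup>2) / 2"
          "\<sigma>s s * ((2 * \<kappa>M)\<^sup>2 / 2) = (\<sigma>s s * (2 * \<kappa>M)\<^sup>2) / 2" by simp_all
        then show ?thesis using m by linarith
      qed
    qed
    also have "\<dots> = (\<Sum>s=1..T. \<sigma>s s) * ((2 * \<kappa>M)\<^sup>2 / 2)" by (simp only: sum_distrib_right)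
    also have "\<dots> = \<sigma> * sqrt (H T) / 2 * (2 * \<kappa>M)\<^sup>2" unfolding S_eq by simp
    finally show ?thesis by simp
  qed
  define xa where "xa = traj A B w (\<lambda>s. dac lag (Ms s) w s)"
  define E where "E t = norm (xa t - xM A B lag w (Ms t) t)" for t
  have onA: "onorm (\<lambda>x. A *v x) = \<rho>" using A \<rho>_def by simp
  have K0: "K \<ge> 0" unfolding K_def using wb0 kB0 by simp
  have \<rho>0: "\<rho> \<ge> 0" using \<delta> \<rho>_def by simp
  have cdiff: "norm (traj A B w (dac lag M w) n - traj A B w (dac lag M' w) n) \<le> K * norm (M - M') / \<delta>"
    for n and M M' :: "real^'dx^'du^'p"
  proof (induction n)
    case 0 then show ?case using K0 \<delta> by simp
  next
    case (Suc n)
    have "norm (traj A B w (dac lag M w) (Suc n) - traj A B w (dac lag M' w) (Suc n))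
      \<le> onorm (\<lambda>x. A *v x) * norm (traj A B w (dac lag M w) n - traj A B w (dac lag M' w) n)
        + norm B * norm (dac lag M w n - dac lag M' w n)" by (rule traj_step)
    also have "\<dots> \<le> \<rho> * (K * norm (M - M') / \<delta>) + \<kappa>B * (real CARD('p) * wb * norm (M - M'))"
      unfolding onA
      apply (rule add_mono)
       apply (rule mult_left_mono[OF Suc \<rho>0])
      apply (rule mult_mono[OF B dac_diff[OF wall]])
      using kB0 wb0 by auto
    also have "\<dots> = K * norm (M - M') / \<delta>" unfolding K_def \<rho>_def using \<delta> by (simp add: field_simps)
    finally show ?case .
  qed
  have E1: "E 1 = 0" by (simp add: E_def xa_def xM_def)
  have Enn: "E t \<ge> 0" for t by (simp add: E_def)
  have Estep: "E (Suc t) \<le> (1 - \<delta>) * E t + K * e t / \<delta>" for t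
  proof -
    let ?b = "xM A B lag w (Ms t) (Suc t)"
    have "xa (Suc t) - xM A B lag w (Ms (Suc t)) (Suc t) = (xa (Suc t) - ?b) + (?b - xM A B lag w (Ms (Suc t)) (Suc t))"
      by simp
    then have "E (Suc t) \<le> norm (xa (Suc t) - ?b) + norm (?b - xM A B lag w (Ms (Suc t)) (Suc t))"
      unfolding E_def by (metis norm_triangle_ineq)
    also have "norm (xa (Suc t) - ?b) \<le> \<rho> * E t"
    proof -
      have "norm (xa (Suc t) - ?b) \<le> onorm (\<lambda>x. A *v x) * norm (xa t - xM A B lag w (Ms t) t)
          + norm B * norm (dac lag (Ms t) w t - dac lag (Ms t) w t)"
        unfolding xa_def xM_def using traj_step[where u = "\<lambda>s. dac lag (Ms s) w s" and u' = "dac lag (Ms t) w" and t = t and A = A and B = B and w = w]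
        by simp
      then show ?thesis unfolding onA E_def by simp
    qed
    also have "norm (?b - xM A B lag w (Ms (Suc t)) (Suc t)) \<le> K * e t / \<delta>"
      using cdiff[where M = "Ms t" and M' = "Ms (Suc t)" and n = "Suc t"] unfolding xM_def e_def by (simp add: norm_minus_commute)
    finally show ?thesis unfolding \<rho>_def by simp
  qed
  have Esum: "(\<Sum>t=1..T. E t) \<le> K / \<delta>\<^sup>2 * (\<Sum>t=1..T. e t)"
  proof -
    have "\<delta> * (\<Sum>t=1..T. E t) + E (Suc T) \<le> K / \<delta> * (\<Sum>t=1..T. e t)"
      by (rule geo_inv[OF \<delta>(1) E1 Estep])
    then have "\<delta> * (\<Sum>t=1..T. E t) \<le> K / \<delta> * (\<Sum>t=1..T. e t)" using Enn[of "Suc T"] by linarith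
    then have "(\<Sum>t=1..T. E t) \<le> (K / \<delta> * (\<Sum>t=1..T. e t)) / \<delta>" using \<delta> by (simp add: pos_le_divide_eq mult.commute)
    then show ?thesis by (simp add: power2_eq_square)
  qed
  have part1: "(\<Sum>t=1..T. c t (xa t) (dac lag (Ms t) w t)) - (\<Sum>t=1..T. f t (Ms t)) \<le> l * (\<Sum>t=1..T. E t)"
  proof -
    have "(\<Sum>t=1..T. c t (xa t) (dac lag (Ms t) w t)) - (\<Sum>t=1..T. f t (Ms t))
        = (\<Sum>t=1..T. c t (xa t) (dac lag (Ms t) w t) - f t (Ms t))" by (simp add: sum_subtractf)
    also have "\<dots> \<le> (\<Sum>t=1..T. l * E t)"
    proof (rule sum_mono)
      fix t assume t: "t \<in> {1..T}"
      have lp: "l-lipschitz_on UNIV (\<lambda>(x, u). c t x u)" using lipschitz t by auto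
      have "dist ((\<lambda>(x, u). c t x u) (xa t, dac lag (Ms t) w t)) ((\<lambda>(x, u). c t x u) (xM A B lag w (Ms t) t, dac lag (Ms t) w t))
          \<le> l * dist (xa t, dac lag (Ms t) w t) (xM A B lag w (Ms t) t, dac lag (Ms t) w t)"
        using lp unfolding lipschitz_on_def by blast
      then have "\<bar>c t (xa t) (dac lag (Ms t) w t) - c t (xM A B lag w (Ms t) t) (dac lag (Ms t) w t)\<bar> \<le> l * E t"
        by (simp add: dist_Pair_Pair dist_real_def E_def dist_norm)
      then show "c t (xa t) (dac lag (Ms t) w t) - f t (Ms t) \<le> l * E t"
        unfolding f_def fcost_def by linarith
    qed
    also have "\<dots> = l * (\<Sum>t=1..T. E t)" by (simp add: sum_distrib_left)
    finally show ?thesis .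
  qed
  define X where "X = (\<Sum>t=1..T. h t / sqrt (H t))"
  have Xb: "X \<le> 2 * sqrt (H T)" unfolding X_def H_def by (rule sqrt_sum) (use h0 in auto)
  have esum: "(\<Sum>t=1..T. e t) \<le> X / \<sigma>"
  proof -
    have "(\<Sum>t=1..T. e t) \<le> (\<Sum>t=1..T. (h t / sqrt (H t)) / \<sigma>)"
    proof (rule sum_mono)
      fix t assume t: "t \<in> {1..T}"
      have "e t \<le> norm (G t) / (\<sigma> * sqrt (H t))" using e_bound t by auto
      also have "\<dots> \<le> h t / (\<sigma> * sqrt (H t))"
        using Gg(1)[of t] gh[of t] t Sge[of t] by (intro divide_right_mono) auto
      finally show "e t \<le> (h t / sqrt (H t)) / \<sigma>" by (simp add: mult.commute)
    qed
    then show ?thesis unfolding X_def by (simp add: sum_divide_distrib)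
  qed
  have \<Delta>sum: "(\<Sum>t=1..T. \<Delta> t) \<le> X / (2 * \<sigma>)"
  proof -
    have "(\<Sum>t=1..T. \<Delta> t) \<le> (\<Sum>t=1..T. (h t / sqrt (H t)) / (2 * \<sigma>))"
    proof (rule sum_mono)
      fix t assume t: "t \<in> {1..T}"
      have "\<Delta> t \<le> (norm (G t))\<^sup>2 / (2 * (\<sigma> * sqrt (H t)))" using \<Delta>_bound t by auto
      also have "\<dots> \<le> h t / (2 * (\<sigma> * sqrt (H t)))"
        using Gg(2)[of t] gh[of t] t Sge[of t] by (intro divide_right_mono) auto
      finally show "\<Delta> t \<le> (h t / sqrt (H t)) / (2 * \<sigma>)" by (simp add: mult.commute mult.left_commute)
    qed
    then show ?thesis unfolding X_def by (simp add: sum_divide_distrib)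
  qed
  have main: "(\<Sum>t=1..T. c t (xa t) (dac lag (Ms t) w t)) - (\<Sum>t=1..T. f t Mstar)
      \<le> l * (K / \<delta>\<^sup>2 * (X / \<sigma>)) + X / (2 * \<sigma>) + \<sigma> * sqrt (H T) / 2 * (2 * \<kappa>M)\<^sup>2"
  proof -
    have a1: "l * (\<Sum>t=1..T. E t) \<le> l * (K / \<delta>\<^sup>2 * (X / \<sigma>))"
      apply (rule mult_left_mono[OF _ l0])
      apply (rule order_trans[OF Esum])
      apply (rule mult_left_mono[OF esum])
      using K0 by simp
    show ?thesis using part1 a1 \<Delta>sum FT tele[of T] by linarith
  qed
  have lhs: "(\<Sum>t=1..T. c t (traj A B w (\<lambda>s. dac lag (Ms s) w s) t) (dac lag (Ms t) w t))
           - (\<Sum>t=1..T. c t (xM A B lag w Mstar t) (dac lag Mstar w t))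
        = (\<Sum>t=1..T. c t (xa t) (dac lag (Ms t) w t)) - (\<Sum>t=1..T. f t Mstar)"
    unfolding xa_def f_def fcost_def by simp
  have z0: "z \<ge> 0" unfolding z_def using wb0 kB0 by simp
  have extra: "l * z / (\<delta> * sqrt (h 1)) \<ge> 0" using l0 z0 \<delta> h1 by simp
  have sH: "sqrt (H T) \<ge> 0" using Hnn[of T] by simp
  show ?thesis
  proof (cases "\<kappa>M = 0")
    case True
    then have "\<sigma> = 0" unfolding \<sigma>_def by simp
    then show ?thesis unfolding lhs using main True by simp
  next
    case False
    then have kMp: "\<kappa>M > 0" using kM0 by simp
    have sp: "\<sigma> > 0" using Spos[OF False order_refl] Hnn[of 1] by (simp add: zero_less_mult_iff)
    have KZ: "K \<le> z"
    proof -
      have "1 \<le> sqrt (real CARD('du))" by simp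
      then have "real CARD('p) * wb * \<kappa>B * 1 \<le> real CARD('p) * wb * \<kappa>B * sqrt (real CARD('du))"
        using wb0 kB0 by (intro mult_left_mono) auto
      then show ?thesis unfolding K_def z_def by (simp add: mult_ac)
    qed
    have b1: "l * (K / \<delta>\<^sup>2 * (X / \<sigma>)) \<le> l * (K / \<delta>\<^sup>2 * (2 * sqrt (H T) / \<sigma>))"
      using Xb sp l0 K0 by (intro mult_left_mono divide_right_mono) auto
    have b2: "X / (2 * \<sigma>) \<le> sqrt (H T) / \<sigma>" using Xb sp by (simp add: field_simps)
    have eq: "l * (K / \<delta>\<^sup>2 * (2 * sqrt (H T) / \<sigma>)) + sqrt (H T) / \<sigma> + \<sigma> * sqrt (H T) / 2 * (2 * \<kappa>M)\<^sup>2
        = ((2 * l * K / \<delta>\<^sup>2 + 1) / \<sigma> + 2 * \<sigma> * \<kappa>M\<^sup>2) * sqrt (H T)"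
      using sp \<delta> by (simp add: field_simps power2_eq_square)
    have q: "2 * l * K / \<delta>\<^sup>2 + 1 \<le> (\<delta>\<^sup>2 + 2 * l * z) / \<delta>\<^sup>2"
    proof -
      have "2 * l * K \<le> 2 * l * z" using KZ l0 by (simp add: mult_left_mono)
      then have "2 * l * K / \<delta>\<^sup>2 \<le> 2 * l * z / \<delta>\<^sup>2" by (rule divide_right_mono) simp
      moreover have "(\<delta>\<^sup>2 + 2 * l * z) / \<delta>\<^sup>2 = 1 + 2 * l * z / \<delta>\<^sup>2" using \<delta> by (simp add: field_simps)
      ultimately show ?thesis by linarith
    qed
    have alg: "(2 * l * K / \<delta>\<^sup>2 + 1) / \<sigma> + 2 * \<sigma> * \<kappa>M\<^sup>2 \<le> 2 * \<kappa>M / \<delta> * sqrt (2 * (\<delta>\<^sup>2 + 2 * l * z))"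
      by (rule final_alg[OF \<delta>(1) kMp a_pos meta_eq_to_obj_eq[OF \<sigma>_def] q])
    have "(\<Sum>t=1..T. c t (xa t) (dac lag (Ms t) w t)) - (\<Sum>t=1..T. f t Mstar)
        \<le> ((2 * l * K / \<delta>\<^sup>2 + 1) / \<sigma> + 2 * \<sigma> * \<kappa>M\<^sup>2) * sqrt (H T)"
      using main b1 b2 eq by linarith
    also have "\<dots> \<le> (2 * \<kappa>M / \<delta> * sqrt (2 * (\<delta>\<^sup>2 + 2 * l * z))) * sqrt (H T)"
      by (rule mult_right_mono[OF alg sH])
    also have "\<dots> \<le> 2 * \<kappa>M / \<delta> * (sqrt (2 * (\<delta>\<^sup>2 + 2 * l * z)) + l * z / (\<delta> * sqrt (h 1))) * sqrt (H T)"
      using extra kMp \<delta> sH by (intro mult_right_mono mult_left_mono) auto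
    finally show ?thesis unfolding lhs .
  qed
qed



end
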